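(* Fix a program in the first-order functional language described in the context, and a program point $\pi$ of an expression in it. Then $$\{\,s\in\{0,1\}^*\mid \mathcal S(L(M_\pi^{\{s\}}))\neq\emptyset\,\}\;=\;L(A^{\mathrm{comp}}_\pi)\,(0+1)^*.$$ Here $M_\pi^{\{s\}}$ is the Mohri–Nederhof regular approximation of the demand grammar $G_\pi^{\{s\}}$, $\mathcal S$ is the simplification function, and $A^{\mathrm{comp}}_\pi$ is the completing automaton of $\pi$.
   Context: Programs. A program consists of first-order function definitions $(\mathtt{define}\ (f\ z_1\ \dots\ z_n)\ e_f)$ and a main expression $e_{\mathrm{main}}$, which is treated as the body of a parameterless function $\mathrm{main}$. Programs are in administrative normal form and all variable names are distinct. The grammar is $e ::= (\mathtt{if}\ x\ e_1\ e_2) \mid (\mathtt{let}\ x \leftarrow s\ \mathtt{in}\ e) \mid (\mathtt{return}\ x)$, $s ::= k \mid \mathtt{nil} \mid (\mathtt{cons}\ x_1\ x_2) \mid (\mathtt{car}\ x) \mid (\mathtt{cdr}\ x) \mid (\mathtt{null?}\ x) \mid (+\ x_1\ x_2) \mid (f\ x_1 \dots x_n)$. Every expression, every application and every variable occurrence carries a distinct label $\pi$. Demands. Let $\Sigma=\{0,1,\bar0,\bar1,2\}$. A demand is a set of strings over $\Sigma$. For sets we write $\sigma_1\sigma_2=\{\alpha\beta\mid\alpha\in\sigma_1,\beta\in\sigma_2\}$ and $a\sigma=\{a\alpha\mid\alpha\in\sigma\}$. Demand analysis. Maps from program points to demands are combined by pointwise union. For applications, $\mathcal A(s,\sigma)$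 is: - for a constant or $\mathtt{nil}$: $\{\pi\mapsto\sigma\}$; - for $(\mathtt{null?}\ \pi_1{:}x)$: $\{\pi_1\mapsto2\sigma,\pi\mapsto\sigma\}$; - for $(+\ \pi_1{:}x\ \pi_2{:}y)$: $\{\pi_1\mapsto2\sigma,\pi_2\mapsto2\sigma,\pi\mapsto\sigma\}$; - for $(\mathtt{car}\ \pi_1{:}x)$: $\{\pi_1\mapsto2\sigma\cup0\sigma,\pi\mapsto\sigma\}$; - for $(\mathtt{cdr}\ \pi_1{:}x)$: $\{\pi_1\mapsto2\sigma\cup1\sigma,\pi\mapsto\sigma\}$; - for $(\mathtt{cons}\ \pi_1{:}x\ \pi_2{:}y)$: $\{\pi_1\mapsto\bar0\sigma,\pi_2\mapsto\bar1\sigma,\pi\mapsto\sigma\}$; - for $(f\ \pi_1{:}y_1\dots\pi_n{:}y_n)$: $\{\pi_i\mapsto L_f^i\sigma,\pi\mapsto\sigma\}$. For expressions, $\mathcal D$ is: - $\mathcal D(\pi{:}(\mathtt{return}\ \pi_1{:}x),\sigma)=\{\pi_1\mapsto\sigma,\pi\mapsto\sigma\}$; - $\mathcal D(\pi{:}(\mathtt{if}\ \pi_1{:}x\ e_1\ e_2),\sigma)=\mathcal D(e_1,\sigma)\cup\mathcal D(e_2,\sigma)\cup\{\pi_1\mapsto2\sigma,\pi\mapsto\sigma\}$; - $\mathcal D(\pi{:}(\mathtt{let}\ x\leftarrow s\ \mathtt{in}\ e),\sigma)=\mathcal A(s,\bigcup_{\pi'}DE(\pi'))\cup DE\cup\{\pi\mapsto\sigma\}$,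 where $DE=\mathcal D(e,\sigma)$ and $\pi'$ ranges over the occurrences of $x$ in $e$. Summaries and concrete demands. $L_f^i\subseteq\Sigma^*$ satisfies $L_f^i\sigma=\bigcup_{\pi'}\mathcal D(e_f,\sigma)(\pi')$ over occurrences $\pi'$ of the $i$-th parameter in $e_f$, for symbolic $\sigma$. The concrete demands are $\sigma_{\mathrm{main}}=$ the given set $\sigma$ of strings over $\{0,1\}$ (the slicing criterion), and $\sigma_f=$ the union of the demands on all call sites of $f$. The demand at $\pi$ in the body of $f$ is $D_\pi=\mathcal D(e_f,\sigma_f)(\pi)$. These equations form a context-free grammar over $\Sigma$ (least solution); $G_\pi^\sigma$ is this grammar with start symbol $D_\pi$. Mohri–Nederhof approximation. Consider each strongly connected component $N'$ of mutually recursive nonterminals whose productions are neither all right-linear nor all left-linear with respect to $N'$. For such a component, add a fresh nonterminal $A'$ for each $A\in N'$. Replace every production $A\to\alpha_0B_1\alpha_1\cdots B_m\alpha_m$ (with $A,B_j\in N'$, the $\alpha_j$ free of $N'$-nonterminals, $m\ge0$) by $A\to\alpha_0B_1,\ B_1'\to\alpha_1B_2,\dots,B_m'\to\alpha_mA'$ (for $m=0$: $A\to\alpha_0A'$), and add $A'\to\epsilon$ for each $A\in N'$. $M_\pi^\sigma$ is the resulting regular grammar/automaton obtained from $G_\pi^\sigma$, with language $L(M_\pi^\sigma)$. Simplification $\mathcal S$ (defined string-wise from the right and extended to sets by union): - $\mathcal S(\epsilon)=\{\epsilon\}$; - $\mathcal S(0w)=0\mathcal S(w)$ and $\mathcal S(1w)=1\mathcal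 S(w)$; - $\mathcal S(\bar0w)=\{\alpha\mid0\alpha\in\mathcal S(w)\}$ and $\mathcal S(\bar1w)=\{\alpha\mid1\alpha\in\mathcal S(w)\}$; - $\mathcal S(2w)=\emptyset$ if $\mathcal S(w)=\emptyset$, and $\{\epsilon\}$ otherwise. Canonicalization $\mathcal C$ (also string-wise from the right, extended by union): - $\mathcal C(\epsilon)=\{\epsilon\}$; - $\mathcal C(0w)=0\mathcal C(w)$, $\mathcal C(1w)=1\mathcal C(w)$, $\mathcal C(2w)=2\mathcal C(w)$; - $\mathcal C(\bar0w)=\{\bar0\mid\mathcal C(w)=\{\epsilon\}\}\cup\{\alpha\mid0\alpha\in\mathcal C(w)\}\cup\{\bar0\bar1\alpha\mid\bar1\alpha\in\mathcal C(w)\}\cup\{\bar0\bar0\alpha\mid\bar0\alpha\in\mathcal C(w)\}$; - $\mathcal C(\bar1w)=\{\bar1\mid\mathcal C(w)=\{\epsilon\}\}\cup\{\alpha\mid1\alpha\in\mathcal C(w)\}\cup\{\bar1\bar1\alpha\mid\bar1\alpha\in\mathcal C(w)\}\cup\{\bar1\bar0\alpha\mid\bar0\alpha\in\mathcal C(w)\}$. $A_\pi$ is an automaton accepting $\mathcal C(L(M_\pi^{\{\epsilon\}}))$. For $p\in\{\bar0,\bar1\}^*$, let $\overline{p}$ be the reverse of $p$ with $\bar0$ replaced by $0$ and $\bar1$ by $1$. The completing automaton $A^{\mathrm{comp}}_\pi$ is constructed from $A_\pi$ as follows: - take as final states the states reachable from the start state using only transitions labelled $0,1,2$; - reverse every $\bar0$-transition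 into a $0$-transition and every $\bar1$-transition into a $1$-transition, dropping all other transitions; - add a new start state with $\epsilon$-transitions to the old final states. Its language is $L(A^{\mathrm{comp}}_\pi)=\{\overline{p}\mid p\in\{\bar0,\bar1\}^*,\ \exists u\in\{0,1,2\}^*:\ up\in L(A_\pi)\}$. *)

theory Defs
  imports Main
begin

section \<open>Demand alphabet\<close>

text \<open>Sigma = {0, 1, 0bar, 1bar, 2}; B0/B1 are the barred letters.\<close>
datatype dsym = D0 | D1 | B0 | B1 | D2

section \<open>Programs (administrative normal form, labelled)\<close>

type_synonym lab = nat
type_synonym var = nat
type_synonym fname = nat

datatype occ = Occ lab var

fun olab :: "occ \<Rightarrow> lab" where "olab (Occ l x) = l"
fun ovar :: "occ \<Rightarrow> var" where "ovar (Occ l x) = x"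

text \<open>Applications s; the first lab is the label of the application.\<close>
datatype app =
    AConst lab int
  | ANil lab
  | ACons lab occ occ
  | ACar lab occ
  | ACdr lab occ
  | ANull lab occ
  | APlus lab occ occ
  | ACall lab fname "occ list"

text \<open>Expressions e; the first lab is the label of the expression.\<close>
datatype expr =
    EIf lab occ expr expr
  | ELet lab var app expr
  | EReturn lab occ

record prog =
  pdefs :: "(fname \<times> var list \<times> expr) list"
  pmain :: expr

datatype fn = Main | Fn fname

fun app_lab :: "app \<Rightarrow> lab" where
  "app_lab (AConst l k) = l"
| "app_lab (ANil l) = l"
| "app_lab (ACons l a b) = l"
| "app_lab (ACar l a) = l"
| "app_lab (ACdr l a) = l"
| "app_lab (ANull l a) = l"
| "app_lab (APlus l a b) = l"
| "app_lab (ACall l f ys) = l"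

fun app_occs :: "app \<Rightarrow> occ list" where
  "app_occs (AConst l k) = []"
| "app_occs (ANil l) = []"
| "app_occs (ACons l a b) = [a, b]"
| "app_occs (ACar l a) = [a]"
| "app_occs (ACdr l a) = [a]"
| "app_occs (ANull l a) = [a]"
| "app_occs (APlus l a b) = [a, b]"
| "app_occs (ACall l f ys) = ys"

fun expr_occs :: "expr \<Rightarrow> occ list" where
  "expr_occs (EIf l x e1 e2) = x # expr_occs e1 @ expr_occs e2"
| "expr_occs (ELet l x s e) = app_occs s @ expr_occs e"
| "expr_occs (EReturn l x) = [x]"

definition occs :: "var \<Rightarrow> expr \<Rightarrow> lab set" where
  "occs x e = {olab v | v. v \<in> set (expr_occs e) \<and> ovar v = x}"

fun expr_labs :: "expr \<Rightarrow> lab list" where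
  "expr_labs (EIf l x e1 e2) = l # olab x # expr_labs e1 @ expr_labs e2"
| "expr_labs (ELet l x s e) = l # app_lab s # map olab (app_occs s) @ expr_labs e"
| "expr_labs (EReturn l x) = [l, olab x]"

fun app_calls :: "app \<Rightarrow> (lab \<times> fname \<times> nat) list" where
  "app_calls (ACall l f ys) = [(l, f, length ys)]"
| "app_calls _ = []"

text \<open>Call sites in e: (label of the application, callee, number of arguments).\<close>
fun calls :: "expr \<Rightarrow> (lab \<times> fname \<times> nat) list" where
  "calls (EIf l x e1 e2) = calls e1 @ calls e2"
| "calls (ELet l x s e) = app_calls s @ calls e"
| "calls (EReturn l x) = []"

fun binders :: "expr \<Rightarrow> var list" where
  "binders (EIf l x e1 e2) = binders e1 @ binders e2"
| "binders (ELet l x s e) = x # binders e"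
| "binders (EReturn l x) = []"

fun scoped :: "var set \<Rightarrow> expr \<Rightarrow> bool" where
  "scoped V (EIf l x e1 e2) = (ovar x \<in> V \<and> scoped V e1 \<and> scoped V e2)"
| "scoped V (ELet l x s e) = (set (map ovar (app_occs s)) \<subseteq> V \<and> scoped (insert x V) e)"
| "scoped V (EReturn l x) = (ovar x \<in> V)"

text \<open>All function bodies, main being the parameterless function Main.\<close>
definition bodies :: "prog \<Rightarrow> (fn \<times> var list \<times> expr) list" where
  "bodies P = (Main, [], pmain P) # map (\<lambda>(f, zs, e). (Fn f, zs, e)) (pdefs P)"

definition prog_labels :: "prog \<Rightarrow> lab set" where
  "prog_labels P = set (concat (map (\<lambda>(h, zs, e). expr_labs e) (bodies P)))"

definition wf_prog :: "prog \<Rightarrow> bool" where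
  "wf_prog P \<longleftrightarrow>
     distinct (map fst (pdefs P)) \<and>
     distinct (concat (map (\<lambda>(h, zs, e). expr_labs e) (bodies P))) \<and>
     distinct (concat (map (\<lambda>(h, zs, e). zs @ binders e) (bodies P))) \<and>
     (\<forall>(h, zs, e) \<in> set (bodies P). scoped (set zs) e \<and>
        (\<forall>(l, g, n) \<in> set (calls e). \<exists>zs' e'. (g, zs', e') \<in> set (pdefs P) \<and> length zs' = n))"

section \<open>Context-free grammars\<close>

datatype ('n, 't) sym = Nt 'n | Tm 't

inductive gen :: "('n \<times> ('n, 't) sym list) set \<Rightarrow> 'n \<Rightarrow> 't list \<Rightarrow> bool"
  and gens :: "('n \<times> ('n, 't) sym list) set \<Rightarrow> ('n, 't) sym list \<Rightarrow> 't list \<Rightarrow> bool"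
  for G where
  "(A, \<alpha>) \<in> G \<Longrightarrow> gens G \<alpha> w \<Longrightarrow> gen G A w"
| "gens G [] []"
| "gens G \<alpha> w \<Longrightarrow> gens G (Tm a # \<alpha>) (a # w)"
| "gen G B u \<Longrightarrow> gens G \<alpha> w \<Longrightarrow> gens G (Nt B # \<alpha>) (u @ w)"

definition lang :: "('n \<times> ('n, 't) sym list) set \<Rightarrow> 'n \<Rightarrow> 't list set" where
  "lang G A = {w. gen G A w}"

section \<open>Demand analysis as a grammar\<close>

text \<open>Nonterminals: L_f^i (0-based i), sigma_f, D_pi.\<close>
datatype nt = LN fname nat | SigN fn | DN lab

type_synonym gsym = "(nt, dsym) sym"

definition lconc :: "'a list set \<Rightarrow> 'a list set \<Rightarrow> 'a list set" where
  "lconc A B = {u @ v | u v. u \<in> A \<and> v \<in> B}"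

definition pre :: "'a \<Rightarrow> 'a list set \<Rightarrow> 'a list set" where
  "pre a S = (\<lambda>w. a # w) ` S"

definition single :: "lab \<Rightarrow> 'a set \<Rightarrow> lab \<Rightarrow> 'a set" where
  "single p X = (\<lambda>q. if q = p then X else {})"

text \<open>The demand transformer A(s, sigma) on sentential forms (maps combined by pointwise union).\<close>
fun Adem :: "app \<Rightarrow> gsym list set \<Rightarrow> lab \<Rightarrow> gsym list set" where
  "Adem (AConst p k) \<sigma> = single p \<sigma>"
| "Adem (ANil p) \<sigma> = single p \<sigma>"
| "Adem (ANull p x) \<sigma> = sup (single (olab x) (pre (Tm D2) \<sigma>)) (single p \<sigma>)"
| "Adem (APlus p x y) \<sigma> =
     sup (sup (single (olab x) (pre (Tm D2) \<sigma>)) (single (olab y) (pre (Tm D2) \<sigma>))) (single p \<sigma>)"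
| "Adem (ACar p x) \<sigma> = sup (single (olab x) (pre (Tm D2) \<sigma> \<union> pre (Tm D0) \<sigma>)) (single p \<sigma>)"
| "Adem (ACdr p x) \<sigma> = sup (single (olab x) (pre (Tm D2) \<sigma> \<union> pre (Tm D1) \<sigma>)) (single p \<sigma>)"
| "Adem (ACons p x y) \<sigma> =
     sup (sup (single (olab x) (pre (Tm B0) \<sigma>)) (single (olab y) (pre (Tm B1) \<sigma>))) (single p \<sigma>)"
| "Adem (ACall p f ys) \<sigma> =
     sup (\<lambda>q. \<Union>i \<in> {i. i < length ys \<and> olab (ys ! i) = q}. pre (Nt (LN f i)) \<sigma>) (single p \<sigma>)"

fun Ddem :: "expr \<Rightarrow> gsym list set \<Rightarrow> lab \<Rightarrow> gsym list set" where
  "Ddem (EReturn p x) \<sigma> = sup (single (olab x) \<sigma>) (single p \<sigma>)"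
| "Ddem (EIf p x e1 e2) \<sigma> =
     sup (sup (Ddem e1 \<sigma>) (Ddem e2 \<sigma>)) (sup (single (olab x) (pre (Tm D2) \<sigma>)) (single p \<sigma>))"
| "Ddem (ELet p x s e) \<sigma> =
     (let DE = Ddem e \<sigma> in sup (sup (Adem s (\<Union>\<pi>' \<in> occs x e. DE \<pi>')) DE) (single p \<sigma>))"

text \<open>The demand grammar for slicing criterion sigma (a set of strings over {0,1}).
  Since D(e, sigma) = D(e, {eps}) sigma, symbolic sigma is handled with {[]}.\<close>
definition demand_grammar :: "prog \<Rightarrow> dsym list set \<Rightarrow> (nt \<times> gsym list) set" where
  "demand_grammar P \<sigma> =
     {(LN f i, w) | f zs e i \<pi>' w. (f, zs, e) \<in> set (pdefs P) \<and> i < length zs \<and>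
                                   \<pi>' \<in> occs (zs ! i) e \<and> w \<in> Ddem e {[]} \<pi>'}
   \<union> {(SigN Main, map Tm s) | s. s \<in> \<sigma>}
   \<union> {(SigN (Fn g), w @ [Nt (SigN h)]) | g h zs e \<pi>c n w.
         (h, zs, e) \<in> set (bodies P) \<and> (\<pi>c, g, n) \<in> set (calls e) \<and> w \<in> Ddem e {[]} \<pi>c}
   \<union> {(DN \<pi>, w @ [Nt (SigN h)]) | \<pi> h zs e w.
         (h, zs, e) \<in> set (bodies P) \<and> \<pi> \<in> set (expr_labs e) \<and> w \<in> Ddem e {[]} \<pi>}"

section \<open>Mohri--Nederhof approximation\<close>

datatype 'n mn = Orig 'n | Prime 'n

definition dep :: "('n \<times> ('n, 't) sym list) set \<Rightarrow> ('n \<times> 'n) set" where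
  "dep G = {(A, B). \<exists>\<alpha>. (A, \<alpha>) \<in> G \<and> Nt B \<in> set \<alpha>}"

definition scc :: "('n \<times> ('n, 't) sym list) set \<Rightarrow> 'n \<Rightarrow> 'n set" where
  "scc G A = {B. (A, B) \<in> (dep G)\<^sup>* \<and> (B, A) \<in> (dep G)\<^sup>*}"

definition nfree :: "'n set \<Rightarrow> ('n, 't) sym list \<Rightarrow> bool" where
  "nfree N \<beta> \<longleftrightarrow> (\<forall>B. Nt B \<in> set \<beta> \<longrightarrow> B \<notin> N)"

definition rlin :: "'n set \<Rightarrow> ('n, 't) sym list \<Rightarrow> bool" where
  "rlin N \<alpha> \<longleftrightarrow> nfree N \<alpha> \<or> (\<exists>\<beta> B. \<alpha> = \<beta> @ [Nt B] \<and> nfree N \<beta>)"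

definition llin :: "'n set \<Rightarrow> ('n, 't) sym list \<Rightarrow> bool" where
  "llin N \<alpha> \<longleftrightarrow> nfree N \<alpha> \<or> (\<exists>\<beta> B. \<alpha> = Nt B # \<beta> \<and> nfree N \<beta>)"

text \<open>The component N' must be transformed: its productions are neither all
  right-linear nor all left-linear with respect to N'.\<close>
definition needs_mn :: "('n \<times> ('n, 't) sym list) set \<Rightarrow> 'n set \<Rightarrow> bool" where
  "needs_mn G N \<longleftrightarrow>
     \<not> (\<forall>(A, \<alpha>) \<in> G. A \<in> N \<longrightarrow> rlin N \<alpha>) \<and> \<not> (\<forall>(A, \<alpha>) \<in> G. A \<in> N \<longrightarrow> llin N \<alpha>)"

fun osym :: "('n, 't) sym \<Rightarrow> ('n mn, 't) sym" where
  "osym (Nt B) = Nt (Orig B)"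
| "osym (Tm a) = Tm a"

text \<open>Splitting A -> a0 B1 a1 ... Bm am into A -> a0 B1, B1' -> a1 B2, ..., Bm' -> am A'.\<close>
fun mn_split :: "'n set \<Rightarrow> 'n mn \<Rightarrow> ('n mn, 't) sym list \<Rightarrow> ('n, 't) sym list \<Rightarrow> 'n
                 \<Rightarrow> ('n mn \<times> ('n mn, 't) sym list) list" where
  "mn_split N H acc [] A = [(H, acc @ [Nt (Prime A)])]"
| "mn_split N H acc (Tm a # r) A = mn_split N H (acc @ [Tm a]) r A"
| "mn_split N H acc (Nt B # r) A =
     (if B \<in> N then (H, acc @ [Nt (Orig B)]) # mn_split N (Prime B) [] r A
      else mn_split N H (acc @ [Nt (Orig B)]) r A)"

definition mohri_nederhof ::
  "('n \<times> ('n, 't) sym list) set \<Rightarrow> ('n mn \<times> ('n mn, 't) sym list) set" where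
  "mohri_nederhof G =
     {(Orig A, map osym \<alpha>) | A \<alpha>. (A, \<alpha>) \<in> G \<and> \<not> needs_mn G (scc G A)}
   \<union> {p | A \<alpha> p. (A, \<alpha>) \<in> G \<and> needs_mn G (scc G A) \<and> p \<in> set (mn_split (scc G A) (Orig A) [] \<alpha> A)}
   \<union> {(Prime A, []) | A. needs_mn G (scc G A)}"

definition Mlang :: "prog \<Rightarrow> dsym list set \<Rightarrow> lab \<Rightarrow> dsym list set" where
  "Mlang P \<sigma> \<pi> = lang (mohri_nederhof (demand_grammar P \<sigma>)) (Orig (DN \<pi>))"

section \<open>Simplification and canonicalization\<close>

fun simp1 :: "dsym list \<Rightarrow> dsym list set" where
  "simp1 [] = {[]}"
| "simp1 (D0 # w) = (\<lambda>a. D0 # a) ` simp1 w"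
| "simp1 (D1 # w) = (\<lambda>a. D1 # a) ` simp1 w"
| "simp1 (B0 # w) = {a. D0 # a \<in> simp1 w}"
| "simp1 (B1 # w) = {a. D1 # a \<in> simp1 w}"
| "simp1 (D2 # w) = (if simp1 w = {} then {} else {[]})"

definition Simp :: "dsym list set \<Rightarrow> dsym list set" where
  "Simp L = (\<Union>w \<in> L. simp1 w)"

fun canon1 :: "dsym list \<Rightarrow> dsym list set" where
  "canon1 [] = {[]}"
| "canon1 (D0 # w) = (\<lambda>a. D0 # a) ` canon1 w"
| "canon1 (D1 # w) = (\<lambda>a. D1 # a) ` canon1 w"
| "canon1 (D2 # w) = (\<lambda>a. D2 # a) ` canon1 w"
| "canon1 (B0 # w) =
     (if canon1 w = {[]} then {[B0]} else {}) \<union> {a. D0 # a \<in> canon1 w}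
     \<union> {B0 # B1 # a | a. B1 # a \<in> canon1 w} \<union> {B0 # B0 # a | a. B0 # a \<in> canon1 w}"
| "canon1 (B1 # w) =
     (if canon1 w = {[]} then {[B1]} else {}) \<union> {a. D1 # a \<in> canon1 w}
     \<union> {B1 # B1 # a | a. B1 # a \<in> canon1 w} \<union> {B1 # B0 # a | a. B0 # a \<in> canon1 w}"

definition Canon :: "dsym list set \<Rightarrow> dsym list set" where
  "Canon L = (\<Union>w \<in> L. canon1 w)"

section \<open>Automata and the completing automaton\<close>

record ('q, 'a) nfa =
  nstart :: 'q
  nfinals :: "'q set"
  ntrans :: "('q \<times> 'a \<times> 'q) set"

inductive npath :: "('q \<times> 'a \<times> 'q) set \<Rightarrow> 'q \<Rightarrow> 'a list \<Rightarrow> 'q \<Rightarrow> bool" for \<delta> where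
  "npath \<delta> q [] q"
| "(q, a, q1) \<in> \<delta> \<Longrightarrow> npath \<delta> q1 w q' \<Longrightarrow> npath \<delta> q (a # w) q'"

definition nfa_lang :: "('q, 'a) nfa \<Rightarrow> 'a list set" where
  "nfa_lang A = {w. \<exists>f \<in> nfinals A. npath (ntrans A) (nstart A) w f}"

text \<open>Language of an automaton with epsilon transitions (label None).\<close>
definition enfa_lang :: "('q, 'a option) nfa \<Rightarrow> 'a list set" where
  "enfa_lang A = {concat (map (\<lambda>l. case l of None \<Rightarrow> [] | Some a \<Rightarrow> [a]) u) | u f.
                    f \<in> nfinals A \<and> npath (ntrans A) (nstart A) u f}"

inductive_set reach012 :: "('q, dsym) nfa \<Rightarrow> 'q set" for A where
  "nstart A \<in> reach012 A"
| "q \<in> reach012 A \<Longrightarrow> (q, a, q') \<in> ntrans A \<Longrightarrow> a \<in> {D0, D1, D2} \<Longrightarrow> q' \<in> reach012 A"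

definition completing :: "('q, dsym) nfa \<Rightarrow> ('q option, dsym option) nfa" where
  "completing A =
     \<lparr> nstart = None,
       nfinals = Some ` reach012 A,
       ntrans = {(None, None, Some f) | f. f \<in> nfinals A}
              \<union> {(Some q', Some D0, Some q) | q q'. (q, B0, q') \<in> ntrans A}
              \<union> {(Some q', Some D1, Some q) | q q'. (q, B1, q') \<in> ntrans A} \<rparr>"

end

theory Submission
  imports Defs
begin

fun ub :: "dsym \<Rightarrow> dsym" where
  "ub B0 = D0" | "ub B1 = D1" | "ub x = x"

lemma canon_sub: "\<forall>a b. a \<in> canon1 w \<longrightarrow> b \<in> canon1 w \<longrightarrow> a = b"
proof (induction w)
  case Nil then show ?case by simp
next
  case (Cons x w)
  show ?case
  proof (cases x)
    case B0 then show ?thesis using Cons.IH by (auto split: if_splits)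
  next
    case B1 then show ?thesis using Cons.IH by (auto split: if_splits)
  qed (use Cons.IH in auto)
qed

lemma canon_cases: "canon1 w = {} \<or> (\<exists>c. canon1 w = {c})"
  using canon_sub[of w] by blast

lemma canon1_B0_iff: "c \<in> canon1 (B0#w) \<longleftrightarrow> (canon1 w = {[]} \<and> c=[B0]) \<or> D0#c \<in> canon1 w \<or> (\<exists>a. c = B0#B1#a \<and> B1#a \<in> canon1 w) \<or> (\<exists>a. c = B0#B0#a \<and> B0#a \<in> canon1 w)"
  by (simp only: canon1.simps Un_iff mem_Collect_eq if_split) blast

lemma canon1_B1_iff: "c \<in> canon1 (B1#w) \<longleftrightarrow> (canon1 w = {[]} \<and> c=[B1]) \<or> D1#c \<in> canon1 w \<or> (\<exists>a. c = B1#B1#a \<and> B1#a \<in> canon1 w) \<or> (\<exists>a. c = B1#B0#a \<and> B0#a \<in> canon1 w)"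
  by (simp only: canon1.simps Un_iff mem_Collect_eq if_split) blast

lemma canon_form: "c \<in> canon1 w \<Longrightarrow> \<exists>u p. c = u @ p \<and> set u \<subseteq> {D0,D1,D2} \<and> set p \<subseteq> {B0,B1}"
proof (induction w arbitrary: c)
  case Nil then show ?case by simp
next
  case (Cons x w)
  show ?case
  proof (cases x)
    case D0
    then obtain c' where c': "c = D0 # c'" "c' \<in> canon1 w" using Cons.prems by auto
    then obtain u p where "c' = u @ p" "set u \<subseteq> {D0,D1,D2}" "set p \<subseteq> {B0,B1}" using Cons.IH by blast
    then show ?thesis using c' by (intro exI[of _ "D0 # u"] exI[of _ p]) auto
  next
    case D1
    then obtain c' where c': "c = D1 # c'" "c' \<in> canon1 w" using Cons.prems by auto
    then obtain u p where "c' = u @ p" "set u \<subseteq> {D0,D1,D2}" "set p \<subseteq> {B0,B1}" using Cons.IH by blast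
    then show ?thesis using c' by (intro exI[of _ "D1 # u"] exI[of _ p]) auto
  next
    case D2
    then obtain c' where c': "c = D2 # c'" "c' \<in> canon1 w" using Cons.prems by auto
    then obtain u p where "c' = u @ p" "set u \<subseteq> {D0,D1,D2}" "set p \<subseteq> {B0,B1}" using Cons.IH by blast
    then show ?thesis using c' by (intro exI[of _ "D2 # u"] exI[of _ p]) auto
  next
    case B0
    from Cons.prems[unfolded B0] consider "canon1 w = {[]}" "c = [B0]" | "D0 # c \<in> canon1 w"
      | a where "c = B0 # B1 # a" "B1 # a \<in> canon1 w"
      | a where "c = B0 # B0 # a" "B0 # a \<in> canon1 w"
      using canon1_B0_iff[of c w] by blast
    then show ?thesis
    proof cases
      case 1 show ?thesis using 1(2) by (intro exI[of _ "[]"] exI[of _ c]) simp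
    next
      case 2
      then obtain u p where up: "D0 # c = u @ p" "set u \<subseteq> {D0,D1,D2}" "set p \<subseteq> {B0,B1}"
        using Cons.IH by blast
      show ?thesis
      proof (cases u)
        case Nil then show ?thesis using up by (cases p) auto
      next
        case (Cons y u')
        then show ?thesis using up by (intro exI[of _ u'] exI[of _ p]) auto
      qed
    next
      case (3 a)
      then obtain u p where up: "B1 # a = u @ p" "set u \<subseteq> {D0,D1,D2}" "set p \<subseteq> {B0,B1}"
        using Cons.IH by blast
      then have "u = []" by (cases u) auto
      then show ?thesis using 3 up by (intro exI[of _ "[]"] exI[of _ c]) auto
    next
      case (4 a)
      then obtain u p where up: "B0 # a = u @ p" "set u \<subseteq> {D0,D1,D2}" "set p \<subseteq> {B0,B1}"
        using Cons.IH by blast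
      then have "u = []" by (cases u) auto
      then show ?thesis using 4 up by (intro exI[of _ "[]"] exI[of _ c]) auto
    qed
  next
    case B1
    from Cons.prems[unfolded B1] consider "canon1 w = {[]}" "c = [B1]" | "D1 # c \<in> canon1 w"
      | a where "c = B1 # B1 # a" "B1 # a \<in> canon1 w"
      | a where "c = B1 # B0 # a" "B0 # a \<in> canon1 w"
      using canon1_B1_iff[of c w] by blast
    then show ?thesis
    proof cases
      case 1 show ?thesis using 1(2) by (intro exI[of _ "[]"] exI[of _ c]) simp
    next
      case 2
      then obtain u p where up: "D1 # c = u @ p" "set u \<subseteq> {D0,D1,D2}" "set p \<subseteq> {B0,B1}"
        using Cons.IH by blast
      show ?thesis
      proof (cases u)
        case Nil then show ?thesis using up by (cases p) auto
      next
        case (Cons y u')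
        then show ?thesis using up by (intro exI[of _ u'] exI[of _ p]) auto
      qed
    next
      case (3 a)
      then obtain u p where up: "B1 # a = u @ p" "set u \<subseteq> {D0,D1,D2}" "set p \<subseteq> {B0,B1}"
        using Cons.IH by blast
      then have "u = []" by (cases u) auto
      then show ?thesis using 3 up by (intro exI[of _ "[]"] exI[of _ c]) auto
    next
      case (4 a)
      then obtain u p where up: "B0 # a = u @ p" "set u \<subseteq> {D0,D1,D2}" "set p \<subseteq> {B0,B1}"
        using Cons.IH by blast
      then have "u = []" by (cases u) auto
      then show ?thesis using 4 up by (intro exI[of _ "[]"] exI[of _ c]) auto
    qed
  qed
qed

lemma simp_canon: "simp1 (w @ s) = (\<Union>c\<in>canon1 w. simp1 (c @ s))"
proof (induction w)
  case Nil then show ?case by simp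
next
  case (Cons x w)
  from canon_cases[of w] show ?case
  proof
    assume e: "canon1 w = {}"
    then show ?thesis using Cons by (cases x) auto
  next
    assume "\<exists>c. canon1 w = {c}"
    then obtain c where c: "canon1 w = {c}" by blast
    have IH: "simp1 (w @ s) = simp1 (c @ s)" using Cons c by simp
    show ?thesis
    proof (cases x)
      case B0 then show ?thesis using IH c
        by (cases c rule: simp1.cases) auto
    next
      case B1 then show ?thesis using IH c
        by (cases c rule: simp1.cases) auto
    qed (use IH c in auto)
  qed
qed

lemma simp_01: "set s \<subseteq> {D0,D1} \<Longrightarrow> simp1 s = {s}"
proof (induction s)
  case (Cons a s) then show ?case by (cases a) auto
qed simp

lemma simp_bar: "set p \<subseteq> {B0,B1} \<Longrightarrow> set s \<subseteq> {D0,D1} \<Longrightarrow>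
   simp1 (p @ s) = {r. s = map ub (rev p) @ r}"
proof (induction p)
  case Nil then show ?case by (simp add: simp_01)
next
  case (Cons a p) then show ?case by (cases a) auto
qed

lemma simp_u: "set u \<subseteq> {D0,D1,D2} \<Longrightarrow> (simp1 (u @ x) = {}) = (simp1 x = {})"
proof (induction u)
  case (Cons a u) then show ?case by (cases a) auto
qed simp

lemma simp_up: "set u \<subseteq> {D0,D1,D2} \<Longrightarrow> set p \<subseteq> {B0,B1} \<Longrightarrow> set s \<subseteq> {D0,D1} \<Longrightarrow>
   (simp1 ((u @ p) @ s) \<noteq> {}) = (\<exists>r. s = map ub (rev p) @ r)"
  using simp_u[of u "p @ s"] simp_bar[of p s] by auto

lemma npath_Nil[simp]: "npath d q [] q' \<longleftrightarrow> q = q'"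
  by (auto elim: npath.cases intro: npath.intros)

lemma npath_Cons[simp]: "npath d q (a # w) q' \<longleftrightarrow> (\<exists>q1. (q, a, q1) \<in> d \<and> npath d q1 w q')"
  by (auto elim: npath.cases intro: npath.intros)

lemma npath_append: "npath d q (u @ v) q' \<longleftrightarrow> (\<exists>m. npath d q u m \<and> npath d m v q')"
  by (induction u arbitrary: q) auto

lemma reach012_path: "q \<in> reach012 A \<longleftrightarrow> (\<exists>u. set u \<subseteq> {D0,D1,D2} \<and> npath (ntrans A) (nstart A) u q)"
proof
  assume "q \<in> reach012 A"
  then show "\<exists>u. set u \<subseteq> {D0,D1,D2} \<and> npath (ntrans A) (nstart A) u q"
  proof (induction rule: reach012.induct)
    case 1 then show ?case by (intro exI[of _ "[]"]) simp
  next
    case (2 q a q')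
    then obtain u where "set u \<subseteq> {D0,D1,D2}" "npath (ntrans A) (nstart A) u q" by blast
    then show ?case using 2 by (intro exI[of _ "u @ [a]"]) (auto simp: npath_append)
  qed
next
  assume "\<exists>u. set u \<subseteq> {D0,D1,D2} \<and> npath (ntrans A) (nstart A) u q"
  then obtain u where u: "set u \<subseteq> {D0,D1,D2}" "npath (ntrans A) (nstart A) u q" by blast
  have "npath (ntrans A) q0 u q \<Longrightarrow> q0 \<in> reach012 A \<Longrightarrow> set u \<subseteq> {D0,D1,D2} \<Longrightarrow> q \<in> reach012 A" for q0
    by (induction rule: npath.induct) (auto intro: reach012.intros)
  then show "q \<in> reach012 A" using u by (auto intro: reach012.intros)
qed

lemma compl_path1:
  assumes "npath (ntrans (completing A)) x xs g"
  shows "\<forall>q'. x = Some q' \<longrightarrow> (\<exists>q p. g = Some q \<and> set p \<subseteq> {B0,B1} \<and>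
            xs = map Some (map ub (rev p)) \<and> npath (ntrans A) q p q')"
  using assms
proof (induction rule: npath.induct)
  case (1 q) then show ?case by (auto intro!: exI[of _ "[]"])
next
  case (2 q a q1 w q'')
  show ?case
  proof (intro allI impI)
    fix q' assume qq: "q = Some q'"
    from 2(1) qq obtain q1' b where t: "q1 = Some q1'" "(a = Some D0 \<and> b = B0) \<or> (a = Some D1 \<and> b = B1)"
       "(q1', b, q') \<in> ntrans A"
      by (auto simp: completing_def)
    from 2(3) t obtain q p where ih: "q'' = Some q" "set p \<subseteq> {B0,B1}" "w = map Some (map ub (rev p))"
       "npath (ntrans A) q p q1'" by blast
    show "\<exists>q p. q'' = Some q \<and> set p \<subseteq> {B0,B1} \<and> a # w = map Some (map ub (rev p)) \<and> npath (ntrans A) q p q'"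
      using ih t by (intro exI[of _ q] exI[of _ "p @ [b]"]) (auto simp: npath_append)
  qed
qed

lemma compl_path2:
  assumes "npath (ntrans A) q p q'" "set p \<subseteq> {B0,B1}"
  shows "npath (ntrans (completing A)) (Some q') (map Some (map ub (rev p))) (Some q)"
  using assms
proof (induction rule: npath.induct)
  case (1 q) then show ?case by simp
next
  case (2 q a q1 w q')
  then have "npath (ntrans (completing A)) (Some q') (map Some (map ub (rev w))) (Some q1)" by simp
  moreover have "(Some q1, Some (ub a), Some q) \<in> ntrans (completing A)"
    using 2 by (cases a) (auto simp: completing_def)
  ultimately show ?case by (auto simp: npath_append)
qed

lemma enfa_completing:
  "enfa_lang (completing A) = {map ub (rev p) | p u f. set p \<subseteq> {B0,B1} \<and> set u \<subseteq> {D0,D1,D2} \<and>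
      f \<in> nfinals A \<and> npath (ntrans A) (nstart A) (u @ p) f}"
  (is "?L = ?R")
proof
  show "?L \<subseteq> ?R"
  proof
    fix x assume "x \<in> ?L"
    then obtain xs g where x: "x = concat (map (\<lambda>l. case l of None \<Rightarrow> [] | Some a \<Rightarrow> [a]) xs)"
      "g \<in> nfinals (completing A)" "npath (ntrans (completing A)) (nstart (completing A)) xs g"
      unfolding enfa_lang_def by blast
    have gS: "g \<in> Some ` reach012 A" using x(2) by (simp add: completing_def)
    have st: "nstart (completing A) = None" by (simp add: completing_def)
    obtain y xs' where xs: "xs = y # xs'" using x(3) gS st by (cases xs) auto
    then obtain s1 where s1: "(None, y, s1) \<in> ntrans (completing A)" "npath (ntrans (completing A)) s1 xs' g"
      using x(3) st by auto
    then obtain f where f: "y = None" "s1 = Some f" "f \<in> nfinals A" by (auto simp: completing_def)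
    obtain q p where qp: "g = Some q" "set p \<subseteq> {B0,B1}" "xs' = map Some (map ub (rev p))"
       "npath (ntrans A) q p f" using compl_path1[OF s1(2)] f by blast
    obtain u where u: "set u \<subseteq> {D0,D1,D2}" "npath (ntrans A) (nstart A) u q"
      using gS qp(1) reach012_path[of q A] by auto
    have "x = map ub (rev p)" using x(1) xs f qp(3) by (simp add: comp_def)
    then show "x \<in> ?R" using qp u f by (auto simp: npath_append)
  qed
next
  show "?R \<subseteq> ?L"
  proof
    fix x assume "x \<in> ?R"
    then obtain p u f where pu: "x = map ub (rev p)" "set p \<subseteq> {B0,B1}" "set u \<subseteq> {D0,D1,D2}"
      "f \<in> nfinals A" "npath (ntrans A) (nstart A) (u @ p) f" by blast
    then obtain q where q: "npath (ntrans A) (nstart A) u q" "npath (ntrans A) q p f"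
      by (auto simp: npath_append)
    have qr: "Some q \<in> nfinals (completing A)" using q(1) pu(3) reach012_path[of q A]
      by (auto simp: completing_def)
    have "npath (ntrans (completing A)) None (None # map Some (map ub (rev p))) (Some q)"
      using compl_path2[OF q(2) pu(2)] pu(4) by (auto simp: completing_def)
    moreover have "x = concat (map (\<lambda>l. case l of None \<Rightarrow> [] | Some a \<Rightarrow> [a]) (None # map Some (map ub (rev p))))"
      using pu(1) by (simp add: comp_def)
    ultimately show "x \<in> ?L" unfolding enfa_lang_def using qr
      by (smt (verit) completing_def mem_Collect_eq nfa.select_convs(1))
  qed
qed

lemma gens_Nil_inv: "gens G [] w \<Longrightarrow> w = []"
  by (cases rule: gens.cases) auto

lemma gens_map_Tm_inv: "gens G (map Tm s) w \<Longrightarrow> w = s"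
proof (induction s arbitrary: w)
  case Nil then show ?case by (simp add: gens_Nil_inv)
next
  case (Cons a s) then show ?case by (auto elim: gens.cases)
qed

lemma gens_single: "gen G C u \<Longrightarrow> gens G [Nt C] u"
  using gen_gens.intros(4)[of G C u "[]" "[]"] gen_gens.intros(2)[of G] by simp

lemma gens_map_Tm: "gens G (map Tm s) s"
  by (induction s) (auto intro: gen_gens.intros)

context
  fixes B :: "('n \<times> ('n, 't) sym list) set" and X :: 'n and inT :: "'n \<Rightarrow> bool" and \<sigma> :: "'t list set"
  assumes X: "inT X" and B1: "\<And>\<beta>. (X, \<beta>) \<notin> B"
    and B2: "\<And>H \<beta>. (H, \<beta>) \<in> B \<Longrightarrow> inT H \<Longrightarrow>
               \<exists>w Z. \<beta> = w @ [Nt Z] \<and> inT Z \<and> (\<forall>Y. Nt Y \<in> set w \<longrightarrow> \<not> inT Y)"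
    and B3: "\<And>H \<beta> Y. (H, \<beta>) \<in> B \<Longrightarrow> \<not> inT H \<Longrightarrow> Nt Y \<in> set \<beta> \<Longrightarrow> \<not> inT Y"
begin

lemma tail_fwd:
  shows "gen (B \<union> {(X, map Tm s) | s. s \<in> \<sigma>}) Y v \<Longrightarrow>
           (\<not> inT Y \<longrightarrow> gen (B \<union> {(X, [])}) Y v) \<and>
           (inT Y \<longrightarrow> (\<exists>u s. s \<in> \<sigma> \<and> gen (B \<union> {(X, [])}) Y u \<and> v = u @ s))"
    and "gens (B \<union> {(X, map Tm s) | s. s \<in> \<sigma>}) \<alpha> v \<Longrightarrow>
           ((\<forall>Y. Nt Y \<in> set \<alpha> \<longrightarrow> \<not> inT Y) \<longrightarrow> gens (B \<union> {(X, [])}) \<alpha> v) \<and>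
           (\<forall>w Z. \<alpha> = w @ [Nt Z] \<and> inT Z \<and> (\<forall>Y. Nt Y \<in> set w \<longrightarrow> \<not> inT Y) \<longrightarrow>
              (\<exists>u s. s \<in> \<sigma> \<and> gens (B \<union> {(X, [])}) \<alpha> u \<and> v = u @ s))"
proof (induction rule: gen_gens.inducts)
  case (1 A \<alpha> w)
  show ?case
  proof (intro conjI impI)
    assume nA: "\<not> inT A"
    then have AB: "(A, \<alpha>) \<in> B" using 1(1) X by auto
    then have "\<forall>Y. Nt Y \<in> set \<alpha> \<longrightarrow> \<not> inT Y" using B3 nA by blast
    then have "gens (B \<union> {(X, [])}) \<alpha> w" using 1(3) by blast
    then show "gen (B \<union> {(X, [])}) A w" using AB by (auto intro: gen_gens.intros)
  next
    assume iA: "inT A"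
    show "\<exists>u s. s \<in> \<sigma> \<and> gen (B \<union> {(X, [])}) A u \<and> w = u @ s"
    proof (cases "(A, \<alpha>) \<in> B")
      case True
      then obtain w' Z where "\<alpha> = w' @ [Nt Z]" "inT Z" "\<forall>Y. Nt Y \<in> set w' \<longrightarrow> \<not> inT Y"
        using B2 iA by blast
      then obtain u s where "s \<in> \<sigma>" "gens (B \<union> {(X, [])}) \<alpha> u" "w = u @ s" using 1(3) by blast
      then show ?thesis using True by (auto intro: gen_gens.intros)
    next
      case False
      then obtain s where s: "A = X" "\<alpha> = map Tm s" "s \<in> \<sigma>" using 1(1) by auto
      then have "w = s" using 1(2) gens_map_Tm_inv by blast
      moreover have "gen (B \<union> {(X, [])}) X []"
        by (rule gen_gens.intros(1)[where \<alpha>="[]"]) (auto intro: gen_gens.intros)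
      ultimately show ?thesis using s by (intro exI[of _ "[]"] exI[of _ s]) auto
    qed
  qed
next
  case 2
  then show ?case by (auto intro: gen_gens.intros)
next
  case (3 \<alpha> w a)
  show ?case
  proof (intro conjI impI allI)
    assume "\<forall>Y. Nt Y \<in> set (Tm a # \<alpha>) \<longrightarrow> \<not> inT Y"
    then show "gens (B \<union> {(X, [])}) (Tm a # \<alpha>) (a # w)" using 3 by (auto intro: gen_gens.intros)
  next
    fix w' Z assume h: "Tm a # \<alpha> = w' @ [Nt Z] \<and> inT Z \<and> (\<forall>Y. Nt Y \<in> set w' \<longrightarrow> \<not> inT Y)"
    then obtain w'' where w'': "w' = Tm a # w''" by (cases w') auto
    then have "\<alpha> = w'' @ [Nt Z]" "\<forall>Y. Nt Y \<in> set w'' \<longrightarrow> \<not> inT Y" using h by auto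
    then obtain u s where "s \<in> \<sigma>" "gens (B \<union> {(X, [])}) \<alpha> u" "w = u @ s" using 3 h by blast
    then show "\<exists>u s. s \<in> \<sigma> \<and> gens (B \<union> {(X, [])}) (Tm a # \<alpha>) u \<and> a # w = u @ s"
      by (intro exI[of _ "a # u"] exI[of _ s]) (auto intro: gen_gens.intros)
  qed
next
  case (4 C u \<alpha> w)
  show ?case
  proof (intro conjI impI allI)
    assume "\<forall>Y. Nt Y \<in> set (Nt C # \<alpha>) \<longrightarrow> \<not> inT Y"
    then show "gens (B \<union> {(X, [])}) (Nt C # \<alpha>) (u @ w)" using 4 by (auto intro: gen_gens.intros)
  next
    fix w' Z assume h: "Nt C # \<alpha> = w' @ [Nt Z] \<and> inT Z \<and> (\<forall>Y. Nt Y \<in> set w' \<longrightarrow> \<not> inT Y)"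
    show "\<exists>u' s. s \<in> \<sigma> \<and> gens (B \<union> {(X, [])}) (Nt C # \<alpha>) u' \<and> u @ w = u' @ s"
    proof (cases w')
      case Nil
      then have c: "C = Z" "\<alpha> = []" using h by auto
      then have "w = []" using 4(3) gens_Nil_inv by blast
      obtain u' s where us: "s \<in> \<sigma>" "gen (B \<union> {(X, [])}) C u'" "u = u' @ s" using 4(2) c h by blast
      have "gens (B \<union> {(X, [])}) [Nt C] u'"
        using us(2) by (rule gens_single)
      then show ?thesis using us c \<open>w = []\<close> by (intro exI[of _ u'] exI[of _ s]) auto
    next
      case (Cons y w'')
      then have c: "y = Nt C" "\<not> inT C" "\<alpha> = w'' @ [Nt Z]" "\<forall>Y. Nt Y \<in> set w'' \<longrightarrow> \<not> inT Y"
        using h by auto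
      then have gC: "gen (B \<union> {(X, [])}) C u" using 4(2) by blast
      obtain u2 s where us: "s \<in> \<sigma>" "gens (B \<union> {(X, [])}) \<alpha> u2" "w = u2 @ s" using 4(4) c h by blast
      show ?thesis using gC us by (intro exI[of _ "u @ u2"] exI[of _ s]) (auto intro: gen_gens.intros)
    qed
  qed
qed

lemma tail_bwd:
  shows "gen (B \<union> {(X, [])}) Y v \<Longrightarrow>
           (\<not> inT Y \<longrightarrow> gen (B \<union> {(X, map Tm s) | s. s \<in> \<sigma>}) Y v) \<and>
           (inT Y \<longrightarrow> (\<forall>s\<in>\<sigma>. gen (B \<union> {(X, map Tm s) | s. s \<in> \<sigma>}) Y (v @ s)))"
    and "gens (B \<union> {(X, [])}) \<alpha> v \<Longrightarrow>
           ((\<forall>Y. Nt Y \<in> set \<alpha> \<longrightarrow> \<not> inT Y) \<longrightarrow> gens (B \<union> {(X, map Tm s) | s. s \<in> \<sigma>}) \<alpha> v) \<and>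
           (\<forall>w Z. \<alpha> = w @ [Nt Z] \<and> inT Z \<and> (\<forall>Y. Nt Y \<in> set w \<longrightarrow> \<not> inT Y) \<longrightarrow>
              (\<forall>s\<in>\<sigma>. gens (B \<union> {(X, map Tm s) | s. s \<in> \<sigma>}) \<alpha> (v @ s)))"
proof (induction rule: gen_gens.inducts)
  case (1 A \<alpha> w)
  show ?case
  proof (intro conjI impI ballI)
    assume nA: "\<not> inT A"
    then have AB: "(A, \<alpha>) \<in> B" using 1(1) X by auto
    then have "\<forall>Y. Nt Y \<in> set \<alpha> \<longrightarrow> \<not> inT Y" using B3 nA by blast
    then have "gens (B \<union> {(X, map Tm s) | s. s \<in> \<sigma>}) \<alpha> w" using 1(3) by blast
    then show "gen (B \<union> {(X, map Tm s) | s. s \<in> \<sigma>}) A w" using AB by (auto intro: gen_gens.intros)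
  next
    fix s assume iA: "inT A" and s: "s \<in> \<sigma>"
    show "gen (B \<union> {(X, map Tm s) | s. s \<in> \<sigma>}) A (w @ s)"
    proof (cases "(A, \<alpha>) \<in> B")
      case True
      then obtain w' Z where "\<alpha> = w' @ [Nt Z]" "inT Z" "\<forall>Y. Nt Y \<in> set w' \<longrightarrow> \<not> inT Y"
        using B2 iA by blast
      then have "gens (B \<union> {(X, map Tm s) | s. s \<in> \<sigma>}) \<alpha> (w @ s)" using 1(3) s by blast
      then show ?thesis using True by (auto intro: gen_gens.intros)
    next
      case False
      then have a: "A = X" "\<alpha> = []" using 1(1) by auto
      then have "w = []" using 1(2) gens_Nil_inv by blast
      moreover have "gen (B \<union> {(X, map Tm s) | s. s \<in> \<sigma>}) X s"
        by (rule gen_gens.intros(1)[where \<alpha>="map Tm s"]) (use s gens_map_Tm in auto)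
      ultimately show ?thesis using a by auto
    qed
  qed
next
  case 2
  then show ?case by (auto intro: gen_gens.intros)
next
  case (3 \<alpha> w a)
  show ?case
  proof (intro conjI impI allI ballI)
    assume "\<forall>Y. Nt Y \<in> set (Tm a # \<alpha>) \<longrightarrow> \<not> inT Y"
    then show "gens (B \<union> {(X, map Tm s) | s. s \<in> \<sigma>}) (Tm a # \<alpha>) (a # w)" using 3 by (auto intro: gen_gens.intros)
  next
    fix w' Z s assume h: "Tm a # \<alpha> = w' @ [Nt Z] \<and> inT Z \<and> (\<forall>Y. Nt Y \<in> set w' \<longrightarrow> \<not> inT Y)"
      and s: "s \<in> \<sigma>"
    then obtain w'' where w'': "w' = Tm a # w''" by (cases w') auto
    then have "\<alpha> = w'' @ [Nt Z]" "\<forall>Y. Nt Y \<in> set w'' \<longrightarrow> \<not> inT Y" using h by auto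
    then have "gens (B \<union> {(X, map Tm s) | s. s \<in> \<sigma>}) \<alpha> (w @ s)" using 3 h s by blast
    then show "gens (B \<union> {(X, map Tm s) | s. s \<in> \<sigma>}) (Tm a # \<alpha>) ((a # w) @ s)"
      by (auto intro: gen_gens.intros)
  qed
next
  case (4 C u \<alpha> w)
  show ?case
  proof (intro conjI impI allI ballI)
    assume "\<forall>Y. Nt Y \<in> set (Nt C # \<alpha>) \<longrightarrow> \<not> inT Y"
    then show "gens (B \<union> {(X, map Tm s) | s. s \<in> \<sigma>}) (Nt C # \<alpha>) (u @ w)" using 4 by (auto intro: gen_gens.intros)
  next
    fix w' Z s assume h: "Nt C # \<alpha> = w' @ [Nt Z] \<and> inT Z \<and> (\<forall>Y. Nt Y \<in> set w' \<longrightarrow> \<not> inT Y)"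
      and s: "s \<in> \<sigma>"
    show "gens (B \<union> {(X, map Tm s) | s. s \<in> \<sigma>}) (Nt C # \<alpha>) ((u @ w) @ s)"
    proof (cases w')
      case Nil
      then have c: "C = Z" "\<alpha> = []" using h by auto
      then have "w = []" using 4(3) gens_Nil_inv by blast
      have "gen (B \<union> {(X, map Tm s) | s. s \<in> \<sigma>}) C (u @ s)" using 4(2) c h s by blast
      then have "gens (B \<union> {(X, map Tm s) | s. s \<in> \<sigma>}) [Nt C] (u @ s)"
        by (rule gens_single)
      then show ?thesis using c \<open>w = []\<close> by simp
    next
      case (Cons y w'')
      then have c: "y = Nt C" "\<not> inT C" "\<alpha> = w'' @ [Nt Z]" "\<forall>Y. Nt Y \<in> set w'' \<longrightarrow> \<not> inT Y"
        using h by auto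
      then have gC: "gen (B \<union> {(X, map Tm s) | s. s \<in> \<sigma>}) C u" using 4(2) by blast
      have "gens (B \<union> {(X, map Tm s) | s. s \<in> \<sigma>}) \<alpha> (w @ s)" using 4(4) c h s by blast
      then show ?thesis using gC by (auto intro: gen_gens.intros)
    qed
  qed
qed

end

lemma tail_fwd':
  assumes "inT X" "\<forall>\<beta>. (X, \<beta>) \<notin> B"
    "\<forall>H \<beta>. (H, \<beta>) \<in> B \<and> inT H \<longrightarrow> (\<exists>w Z. \<beta> = w @ [Nt Z] \<and> inT Z \<and> (\<forall>Y. Nt Y \<in> set w \<longrightarrow> \<not> inT Y))"
    "\<forall>H \<beta> Y. (H, \<beta>) \<in> B \<and> \<not> inT H \<and> Nt Y \<in> set \<beta> \<longrightarrow> \<not> inT Y"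
    "gen (B \<union> {(X, map Tm s) | s. s \<in> \<sigma>}) Y v" "inT Y"
  shows "\<exists>u s. s \<in> \<sigma> \<and> gen (B \<union> {(X, [])}) Y u \<and> v = u @ s"
proof -
  have "(\<not> inT Y \<longrightarrow> gen (B \<union> {(X, [])}) Y v) \<and>
           (inT Y \<longrightarrow> (\<exists>u s. s \<in> \<sigma> \<and> gen (B \<union> {(X, [])}) Y u \<and> v = u @ s))"
    by (rule tail_fwd(1)[where inT=inT and X=X and B=B]) (use assms in blast)+
  then show ?thesis using assms(6) by blast
qed

lemma tail_bwd':
  assumes "inT X" "\<forall>\<beta>. (X, \<beta>) \<notin> B"
    "\<forall>H \<beta>. (H, \<beta>) \<in> B \<and> inT H \<longrightarrow> (\<exists>w Z. \<beta> = w @ [Nt Z] \<and> inT Z \<and> (\<forall>Y. Nt Y \<in> set w \<longrightarrow> \<not> inT Y))"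
    "\<forall>H \<beta> Y. (H, \<beta>) \<in> B \<and> \<not> inT H \<and> Nt Y \<in> set \<beta> \<longrightarrow> \<not> inT Y"
    "gen (B \<union> {(X, [])}) Y v" "inT Y" "s \<in> \<sigma>"
  shows "gen (B \<union> {(X, map Tm s) | s. s \<in> \<sigma>}) Y (v @ s)"
proof -
  have "(\<not> inT Y \<longrightarrow> gen (B \<union> {(X, map Tm s) | s. s \<in> \<sigma>}) Y v) \<and>
           (inT Y \<longrightarrow> (\<forall>s\<in>\<sigma>. gen (B \<union> {(X, map Tm s) | s. s \<in> \<sigma>}) Y (v @ s)))"
    by (rule tail_bwd(1)[where inT=inT and X=X and B=B]) (use assms in blast)+
  then show ?thesis using assms(6,7) by blast
qed

fun isLN :: "nt \<Rightarrow> bool" where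
  "isLN (LN f i) = True" | "isLN _ = False"

fun okS :: "gsym \<Rightarrow> bool" where
  "okS (Tm a) = True" | "okS (Nt n) = isLN n"

lemma Adem_ok: "x \<in> Adem s S q \<Longrightarrow> \<forall>z\<in>S. \<forall>y\<in>set z. okS y \<Longrightarrow> \<forall>y\<in>set x. okS y"
  by (cases s) (auto simp: single_def pre_def split: if_splits)

lemma Ddem_ok: "x \<in> Ddem e S q \<Longrightarrow> \<forall>z\<in>S. \<forall>y\<in>set z. okS y \<Longrightarrow> \<forall>y\<in>set x. okS y"
proof (induction e arbitrary: q x)
  case (EIf l v e1 e2) then show ?case by (auto simp: single_def pre_def split: if_splits)
next
  case (ELet l v s e)
  let ?U = "\<Union>\<pi>' \<in> occs v e. Ddem e S \<pi>'"
  have U: "\<forall>z\<in>?U. \<forall>y\<in>set z. okS y" using ELet.IH ELet.prems(2) by blast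
  from ELet.prems(1) consider "x \<in> Adem s ?U q" | "x \<in> Ddem e S q" | "x \<in> single l S q"
    by (auto simp: Let_def)
  then show ?case
  proof cases
    case 1 then show ?thesis using Adem_ok U by blast
  next
    case 2 then show ?thesis using ELet.IH ELet.prems(2) by blast
  next
    case 3 then show ?thesis using ELet.prems(2) by (auto simp: single_def split: if_splits)
  qed
next
  case (EReturn l v) then show ?case by (auto simp: single_def split: if_splits)
qed

lemma K_cases:
  assumes "(A, \<alpha>) \<in> demand_grammar P {}"
  shows "(isLN A \<and> (\<forall>y\<in>set \<alpha>. okS y)) \<or>
         (\<not> isLN A \<and> A \<noteq> SigN Main \<and> (\<exists>w h. \<alpha> = w @ [Nt (SigN h)] \<and> (\<forall>y\<in>set w. okS y)))"
proof -
  have ok: "\<And>e q x. x \<in> Ddem e {[]} q \<Longrightarrow> \<forall>y\<in>set x. okS y" using Ddem_ok by fastforce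
  show ?thesis using assms unfolding demand_grammar_def
    by (elim UnE; clarsimp) (use ok in blast)+
qed

lemma dg_split: "demand_grammar P \<sigma> = demand_grammar P {} \<union> {(SigN Main, map Tm s) | s. s \<in> \<sigma>}"
  unfolding demand_grammar_def by blast

lemma dep_Un_tm: "(\<And>A \<alpha> B. (A, \<alpha>) \<in> E \<Longrightarrow> Nt B \<notin> set \<alpha>) \<Longrightarrow> dep (G \<union> E) = dep G"
  unfolding dep_def by blast

lemma needs_mn_Un_tm: "(\<And>A \<alpha> B. (A, \<alpha>) \<in> E \<Longrightarrow> Nt B \<notin> set \<alpha>) \<Longrightarrow> needs_mn (G \<union> E) N = needs_mn G N"
  unfolding needs_mn_def rlin_def llin_def nfree_def by blast

lemma osym_comp_Tm[simp]: "osym \<circ> Tm = Tm"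
  by (rule ext) simp

lemma map_osym_Tm[simp]: "map osym (map Tm s) = map Tm s"
  by (induction s) auto

lemma Nt_osym: "Nt Y \<in> set (map osym \<alpha>) \<longleftrightarrow> (\<exists>B. Y = Orig B \<and> Nt B \<in> set \<alpha>)"
proof (induction \<alpha>)
  case (Cons a \<alpha>) then show ?case by (cases a) auto
qed simp

lemma ms_head: "(H', \<beta>) \<in> set (mn_split N H acc \<alpha> A) \<Longrightarrow> H' = H \<or> (\<exists>B. H' = Prime B)"
  by (induction N H acc \<alpha> A rule: mn_split.induct) (auto split: if_splits)

lemma ms_syms: "(H', \<beta>) \<in> set (mn_split N H acc \<alpha> A) \<Longrightarrow> Nt Y \<in> set \<beta> \<Longrightarrow>
   Nt Y \<in> set acc \<or> (\<exists>B. Y = Orig B \<and> Nt B \<in> set \<alpha>) \<or> Y = Prime A"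
  by (induction N H acc \<alpha> A arbitrary: H' \<beta> rule: mn_split.induct) (fastforce split: if_splits)+

abbreviation K where "K P \<equiv> demand_grammar P {}"

lemma dep_LN: "(X, Y) \<in> (dep (K P))\<^sup>* \<Longrightarrow> isLN X \<Longrightarrow> isLN Y"
proof (induction rule: rtrancl_induct)
  case (step y z)
  then obtain \<alpha> where "(y, \<alpha>) \<in> K P" "Nt z \<in> set \<alpha>" unfolding dep_def by blast
  then show ?case using K_cases step by fastforce
qed simp

lemma nonLN_no_mn: "\<not> isLN A \<Longrightarrow> \<not> needs_mn (K P) (scc (K P) A)"
proof -
  assume nA: "\<not> isLN A"
  have sc: "\<And>B. B \<in> scc (K P) A \<Longrightarrow> \<not> isLN B" using dep_LN nA unfolding scc_def by blast
  have "\<forall>(A', \<alpha>) \<in> K P. A' \<in> scc (K P) A \<longrightarrow> rlin (scc (K P) A) \<alpha>"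
  proof (clarify)
    fix A' \<alpha> assume a: "(A', \<alpha>) \<in> K P" "A' \<in> scc (K P) A"
    then have "\<not> isLN A'" using sc by blast
    then obtain w h where wh: "\<alpha> = w @ [Nt (SigN h)]" "\<forall>y\<in>set w. okS y" using K_cases[OF a(1)] by blast
    have "nfree (scc (K P) A) w" unfolding nfree_def using wh(2) sc by fastforce
    then show "rlin (scc (K P) A) \<alpha>" unfolding rlin_def using wh by blast
  qed
  then show ?thesis unfolding needs_mn_def by blast
qed

lemma mn_split_dg:
  "mohri_nederhof (demand_grammar P \<sigma>) = mohri_nederhof (K P) \<union> {(Orig (SigN Main), map Tm s) | s. s \<in> \<sigma>}"
proof -
  have E: "\<And>A \<alpha> B. (A, \<alpha>) \<in> {(SigN Main, map Tm s) | s. s \<in> \<sigma>} \<Longrightarrow> Nt B \<notin> set \<alpha>" by auto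
  have d: "dep (demand_grammar P \<sigma>) = dep (K P)" by (simp only: dg_split[of P \<sigma>] dep_Un_tm[OF E])
  have s: "scc (demand_grammar P \<sigma>) = scc (K P)" by (rule ext) (simp only: scc_def d)
  have n: "needs_mn (demand_grammar P \<sigma>) = needs_mn (K P)"
    by (rule ext) (simp only: dg_split[of P \<sigma>] needs_mn_Un_tm[OF E])
  have nm: "\<not> needs_mn (K P) (scc (K P) (SigN Main))" by (rule nonLN_no_mn) simp
  let ?E = "{(SigN Main, map Tm s) | s. s \<in> \<sigma>}"
  have e1: "{(Orig A, map osym \<alpha>) | A \<alpha>. (A, \<alpha>) \<in> K P \<union> ?E \<and> \<not> needs_mn (K P) (scc (K P) A)}
     = {(Orig A, map osym \<alpha>) | A \<alpha>. (A, \<alpha>) \<in> K P \<and> \<not> needs_mn (K P) (scc (K P) A)}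
       \<union> {(Orig (SigN Main), map Tm s) | s. s \<in> \<sigma>}"
  proof (rule set_eqI, rule iffI)
    fix x assume "x \<in> {(Orig A, map osym \<alpha>) | A \<alpha>. (A, \<alpha>) \<in> K P \<union> ?E \<and> \<not> needs_mn (K P) (scc (K P) A)}"
    then obtain A \<alpha> where a: "x = (Orig A, map osym \<alpha>)" "(A, \<alpha>) \<in> K P \<union> ?E" "\<not> needs_mn (K P) (scc (K P) A)"
      by blast
    from a(2) show "x \<in> {(Orig A, map osym \<alpha>) | A \<alpha>. (A, \<alpha>) \<in> K P \<and> \<not> needs_mn (K P) (scc (K P) A)}
       \<union> {(Orig (SigN Main), map Tm s) | s. s \<in> \<sigma>}"
    proof
      assume "(A, \<alpha>) \<in> K P" then show ?thesis using a by blast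
    next
      assume "(A, \<alpha>) \<in> ?E"
      then obtain s where s: "A = SigN Main" "\<alpha> = map Tm s" "s \<in> \<sigma>" by blast
      then have "x = (Orig (SigN Main), map Tm s)" using a(1) by simp
      then show ?thesis using s(3) by blast
    qed
  next
    fix x assume "x \<in> {(Orig A, map osym \<alpha>) | A \<alpha>. (A, \<alpha>) \<in> K P \<and> \<not> needs_mn (K P) (scc (K P) A)}
       \<union> {(Orig (SigN Main), map Tm s) | s. s \<in> \<sigma>}"
    then show "x \<in> {(Orig A, map osym \<alpha>) | A \<alpha>. (A, \<alpha>) \<in> K P \<union> ?E \<and> \<not> needs_mn (K P) (scc (K P) A)}"
    proof
      assume "x \<in> {(Orig A, map osym \<alpha>) | A \<alpha>. (A, \<alpha>) \<in> K P \<and> \<not> needs_mn (K P) (scc (K P) A)}"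
      then show ?thesis by blast
    next
      assume "x \<in> {(Orig (SigN Main), map Tm s) | s. s \<in> \<sigma>}"
      then obtain s where "x = (Orig (SigN Main), map osym (map Tm s))" "s \<in> \<sigma>" by auto
      then show ?thesis using nm by blast
    qed
  qed
  have e2: "{p | A \<alpha> p. (A, \<alpha>) \<in> K P \<union> ?E \<and> needs_mn (K P) (scc (K P) A) \<and> p \<in> set (mn_split (scc (K P) A) (Orig A) [] \<alpha> A)}
     = {p | A \<alpha> p. (A, \<alpha>) \<in> K P \<and> needs_mn (K P) (scc (K P) A) \<and> p \<in> set (mn_split (scc (K P) A) (Orig A) [] \<alpha> A)}"
  proof (rule set_eqI, rule iffI)
    fix p assume "p \<in> {p | A \<alpha> p. (A, \<alpha>) \<in> K P \<union> ?E \<and> needs_mn (K P) (scc (K P) A) \<and> p \<in> set (mn_split (scc (K P) A) (Orig A) [] \<alpha> A)}"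
    then obtain A \<alpha> where a: "(A, \<alpha>) \<in> K P \<union> ?E" "needs_mn (K P) (scc (K P) A)" "p \<in> set (mn_split (scc (K P) A) (Orig A) [] \<alpha> A)"
      by blast
    have "(A, \<alpha>) \<notin> ?E" using a(2) nm by blast
    then have "(A, \<alpha>) \<in> K P" using a(1) by blast
    then show "p \<in> {p | A \<alpha> p. (A, \<alpha>) \<in> K P \<and> needs_mn (K P) (scc (K P) A) \<and> p \<in> set (mn_split (scc (K P) A) (Orig A) [] \<alpha> A)}"
      using a by blast
  next
    fix p assume "p \<in> {p | A \<alpha> p. (A, \<alpha>) \<in> K P \<and> needs_mn (K P) (scc (K P) A) \<and> p \<in> set (mn_split (scc (K P) A) (Orig A) [] \<alpha> A)}"
    then show "p \<in> {p | A \<alpha> p. (A, \<alpha>) \<in> K P \<union> ?E \<and> needs_mn (K P) (scc (K P) A) \<and> p \<in> set (mn_split (scc (K P) A) (Orig A) [] \<alpha> A)}"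
      by blast
  qed
  show ?thesis unfolding mohri_nederhof_def s n unfolding dg_split[of P \<sigma>] e1 e2
    by (simp only: Un_ac)
qed

fun inT :: "nt mn \<Rightarrow> bool" where
  "inT (Orig n) = (\<not> isLN n)" | "inT (Prime n) = False"

lemma B1: "(Orig (SigN Main), \<beta>) \<notin> mohri_nederhof (K P)"
proof
  assume "(Orig (SigN Main), \<beta>) \<in> mohri_nederhof (K P)"
  then obtain \<alpha> where "(SigN Main, \<alpha>) \<in> K P"
    unfolding mohri_nederhof_def using ms_head by fastforce
  then show False using K_cases by fastforce
qed

lemma B2: "(H, \<beta>) \<in> mohri_nederhof (K P) \<Longrightarrow> inT H \<Longrightarrow>
   \<exists>w Z. \<beta> = w @ [Nt Z] \<and> inT Z \<and> (\<forall>Y. Nt Y \<in> set w \<longrightarrow> \<not> inT Y)"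
proof -
  assume m: "(H, \<beta>) \<in> mohri_nederhof (K P)" and iH: "inT H"
  from m consider
      A \<alpha> where "H = Orig A" "\<beta> = map osym \<alpha>" "(A, \<alpha>) \<in> K P"
    | A \<alpha> where "(A, \<alpha>) \<in> K P" "needs_mn (K P) (scc (K P) A)"
         "(H, \<beta>) \<in> set (mn_split (scc (K P) A) (Orig A) [] \<alpha> A)"
    | A where "H = Prime A"
    unfolding mohri_nederhof_def by blast
  then show ?thesis
  proof cases
    case (1 A \<alpha>)
    then have "\<not> isLN A" using iH by simp
    then obtain w h where wh: "\<alpha> = w @ [Nt (SigN h)]" "\<forall>y\<in>set w. okS y" using K_cases[OF 1(3)] by blast
    have "\<forall>Y. Nt Y \<in> set (map osym w) \<longrightarrow> \<not> inT Y"
    proof (intro allI impI)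
      fix Y assume "Nt Y \<in> set (map osym w)"
      then obtain B where "Y = Orig B" "Nt B \<in> set w" using Nt_osym[of Y w] by blast
      then show "\<not> inT Y" using wh(2) by (cases B) auto
    qed
    then show ?thesis using 1 wh by (intro exI[of _ "map osym w"] exI[of _ "Orig (SigN h)"]) auto
  next
    case (2 A \<alpha>)
    have "isLN A" using nonLN_no_mn 2(2) by blast
    then show ?thesis using ms_head[OF 2(3)] iH by auto
  next
    case 3 then show ?thesis using iH by simp
  qed
qed

lemma B3: "(H, \<beta>) \<in> mohri_nederhof (K P) \<Longrightarrow> \<not> inT H \<Longrightarrow> Nt Y \<in> set \<beta> \<Longrightarrow> \<not> inT Y"
proof -
  assume m: "(H, \<beta>) \<in> mohri_nederhof (K P)" and iH: "\<not> inT H" and Y: "Nt Y \<in> set \<beta>"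
  from m consider
      A \<alpha> where "H = Orig A" "\<beta> = map osym \<alpha>" "(A, \<alpha>) \<in> K P"
    | A \<alpha> where "(A, \<alpha>) \<in> K P" "needs_mn (K P) (scc (K P) A)"
         "(H, \<beta>) \<in> set (mn_split (scc (K P) A) (Orig A) [] \<alpha> A)"
    | A where "H = Prime A" "\<beta> = []"
    unfolding mohri_nederhof_def by blast
  then show ?thesis
  proof cases
    case (1 A \<alpha>)
    then have "isLN A" using iH by simp
    then have ok: "\<forall>y\<in>set \<alpha>. okS y" using K_cases[OF 1(3)] by blast
    obtain B where "Y = Orig B" "Nt B \<in> set \<alpha>" using Y 1(2) Nt_osym[of Y \<alpha>] by blast
    then show ?thesis using ok by (cases B) auto
  next
    case (2 A \<alpha>)
    have "isLN A" using nonLN_no_mn 2(2) by blast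
    then have ok: "\<forall>y\<in>set \<alpha>. okS y" using K_cases[OF 2(1)] by blast
    from ms_syms[OF 2(3) Y] show ?thesis using ok by fastforce
  next
    case 3 then show ?thesis using Y by simp
  qed
qed

lemma Mlang_eq: "Mlang P \<sigma> \<pi> = lang (mohri_nederhof (K P) \<union> {(Orig (SigN Main), map Tm s) | s. s \<in> \<sigma>}) (Orig (DN \<pi>))"
  unfolding Mlang_def mn_split_dg[of P \<sigma>] ..

lemma Mlang_single: "Mlang P {s} \<pi> = {u @ s | u. u \<in> Mlang P {[]} \<pi>}"
proof -
  have e: "{(Orig (SigN Main), map Tm s) | s::dsym list. s \<in> {[]}} = {(Orig (SigN Main), [])}" by auto
  have X: "inT (Orig (SigN Main))" by simp
  have b1: "\<forall>\<beta>. (Orig (SigN Main), \<beta>) \<notin> mohri_nederhof (K P)" using B1 by blast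
  have b2: "\<forall>H \<beta>. (H, \<beta>) \<in> mohri_nederhof (K P) \<and> inT H \<longrightarrow>
     (\<exists>w Z. \<beta> = w @ [Nt Z] \<and> inT Z \<and> (\<forall>Y. Nt Y \<in> set w \<longrightarrow> \<not> inT Y))" using B2 by blast
  have b3: "\<forall>H \<beta> Y. (H, \<beta>) \<in> mohri_nederhof (K P) \<and> \<not> inT H \<and> Nt Y \<in> set \<beta> \<longrightarrow> \<not> inT Y"
    using B3 by blast
  let ?B' = "mohri_nederhof (K P) \<union> {(Orig (SigN Main), [])}"
  let ?Hs = "mohri_nederhof (K P) \<union> {(Orig (SigN Main), map Tm s') | s'. s' \<in> {s}}"
  have L1: "Mlang P {[]} \<pi> = {u. gen ?B' (Orig (DN \<pi>)) u}" unfolding Mlang_eq lang_def e ..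
  have Ls: "Mlang P {s} \<pi> = {v. gen ?Hs (Orig (DN \<pi>)) v}" unfolding Mlang_eq lang_def ..
  have XD: "inT (Orig (DN \<pi>))" by simp
  show ?thesis
  proof (rule set_eqI, rule iffI)
    fix v assume "v \<in> Mlang P {s} \<pi>"
    then have g: "gen ?Hs (Orig (DN \<pi>)) v" unfolding Ls by (rule CollectD)
    have "\<exists>u s'. s' \<in> {s} \<and> gen ?B' (Orig (DN \<pi>)) u \<and> v = u @ s'"
      by (rule tail_fwd'[OF X b1 b2 b3 g XD])
    then obtain u where "gen ?B' (Orig (DN \<pi>)) u" "v = u @ s" by blast
    then show "v \<in> {u @ s | u. u \<in> Mlang P {[]} \<pi>}" unfolding L1 by blast
  next
    fix v assume "v \<in> {u @ s | u. u \<in> Mlang P {[]} \<pi>}"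
    then obtain u where u: "v = u @ s" "gen ?B' (Orig (DN \<pi>)) u"
      unfolding L1 by blast
    have "gen ?Hs (Orig (DN \<pi>)) (u @ s)"
      by (rule tail_bwd'[OF X b1 b2 b3 u(2) XD]) simp
    then show "v \<in> Mlang P {s} \<pi>" unfolding Ls using u(1) by blast
  qed
qed

theorem mainTheorem3:
  fixes P :: prog and \<pi> :: lab and A :: "('q, dsym) nfa"
  assumes "wf_prog P"
    and "\<pi> \<in> prog_labels P"
    and "finite (ntrans A)" and "finite (nfinals A)"
    and "nfa_lang A = Canon (Mlang P {[]} \<pi>)"
  shows "{s. set s \<subseteq> {D0, D1} \<and> Simp (Mlang P {s} \<pi>) \<noteq> {}}
           = lconc (enfa_lang (completing A)) {s. set s \<subseteq> {D0, D1}}"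
proof -
  let ?L = "Mlang P {[]} \<pi>"
  have key: "(set s \<subseteq> {D0, D1} \<and> Simp (Mlang P {s} \<pi>) \<noteq> {}) \<longleftrightarrow>
     (set s \<subseteq> {D0, D1} \<and> (\<exists>u p r. set u \<subseteq> {D0,D1,D2} \<and> set p \<subseteq> {B0,B1} \<and> u @ p \<in> nfa_lang A
        \<and> s = map ub (rev p) @ r))" for s
  proof (cases "set s \<subseteq> {D0, D1}")
    case s01: True
    have "Simp (Mlang P {s} \<pi>) \<noteq> {} \<longleftrightarrow> (\<exists>w\<in>?L. simp1 (w @ s) \<noteq> {})"
      unfolding Simp_def Mlang_single[of P s \<pi>] by blast
    also have "\<dots> \<longleftrightarrow> (\<exists>u p r. set u \<subseteq> {D0,D1,D2} \<and> set p \<subseteq> {B0,B1} \<and> u @ p \<in> nfa_lang A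
        \<and> s = map ub (rev p) @ r)"
    proof
      assume "\<exists>w\<in>?L. simp1 (w @ s) \<noteq> {}"
      then obtain w where w: "w \<in> ?L" "simp1 (w @ s) \<noteq> {}" by blast
      then obtain c where c: "c \<in> canon1 w" "simp1 (c @ s) \<noteq> {}" using simp_canon[of w s] by blast
      obtain u p where up: "c = u @ p" "set u \<subseteq> {D0,D1,D2}" "set p \<subseteq> {B0,B1}" using canon_form[OF c(1)] by blast
      have "c \<in> nfa_lang A" using assms(5) w(1) c(1) unfolding Canon_def by blast
      moreover obtain r where "s = map ub (rev p) @ r" using simp_up[OF up(2,3) s01] c(2) up(1) by blast
      ultimately show "\<exists>u p r. set u \<subseteq> {D0,D1,D2} \<and> set p \<subseteq> {B0,B1} \<and> u @ p \<in> nfa_lang A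
        \<and> s = map ub (rev p) @ r" using up by blast
    next
      assume "\<exists>u p r. set u \<subseteq> {D0,D1,D2} \<and> set p \<subseteq> {B0,B1} \<and> u @ p \<in> nfa_lang A
        \<and> s = map ub (rev p) @ r"
      then obtain u p r where up: "set u \<subseteq> {D0,D1,D2}" "set p \<subseteq> {B0,B1}" "u @ p \<in> nfa_lang A"
        "s = map ub (rev p) @ r" by blast
      obtain w where w: "w \<in> ?L" "u @ p \<in> canon1 w" using up(3) assms(5) unfolding Canon_def by blast
      have "simp1 ((u @ p) @ s) \<noteq> {}" using simp_up[OF up(1,2) s01] up(4) by blast
      then have "simp1 (w @ s) \<noteq> {}" unfolding simp_canon[of w s] using w(2) by blast
      then show "\<exists>w\<in>?L. simp1 (w @ s) \<noteq> {}" using w(1) by blast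
    qed
    finally show ?thesis using s01 by simp
  qed simp
  have ubs: "set p \<subseteq> {B0,B1} \<Longrightarrow> set (map ub (rev p)) \<subseteq> {D0, D1}" for p
    by (induction p) auto
  show ?thesis
  proof (rule set_eqI)
    fix s
    show "s \<in> {s. set s \<subseteq> {D0, D1} \<and> Simp (Mlang P {s} \<pi>) \<noteq> {}} \<longleftrightarrow>
          s \<in> lconc (enfa_lang (completing A)) {s. set s \<subseteq> {D0, D1}}"
    proof
      assume "s \<in> {s. set s \<subseteq> {D0, D1} \<and> Simp (Mlang P {s} \<pi>) \<noteq> {}}"
      then have "set s \<subseteq> {D0, D1} \<and> Simp (Mlang P {s} \<pi>) \<noteq> {}" by (rule CollectD)
      then obtain u p r where h: "set s \<subseteq> {D0, D1}" "set u \<subseteq> {D0,D1,D2}" "set p \<subseteq> {B0,B1}"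
        "u @ p \<in> nfa_lang A" "s = map ub (rev p) @ r" unfolding key by blast
      obtain f where f: "f \<in> nfinals A" "npath (ntrans A) (nstart A) (u @ p) f"
        using h(4) unfolding nfa_lang_def by blast
      have "map ub (rev p) \<in> enfa_lang (completing A)" unfolding enfa_completing
        using h(2,3) f by blast
      moreover have "set r \<subseteq> {D0, D1}" using h(1,5) by auto
      ultimately show "s \<in> lconc (enfa_lang (completing A)) {s. set s \<subseteq> {D0, D1}}"
        unfolding lconc_def using h(5) by blast
    next
      assume "s \<in> lconc (enfa_lang (completing A)) {s. set s \<subseteq> {D0, D1}}"
      then obtain q r where qr: "s = q @ r" "q \<in> enfa_lang (completing A)" "set r \<subseteq> {D0, D1}"
        unfolding lconc_def by blast
      from qr(2) obtain p u f where pu: "q = map ub (rev p)" "set p \<subseteq> {B0,B1}" "set u \<subseteq> {D0,D1,D2}"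
        "f \<in> nfinals A" "npath (ntrans A) (nstart A) (u @ p) f"
        unfolding enfa_completing by blast
      have "u @ p \<in> nfa_lang A" unfolding nfa_lang_def using pu(4,5) by blast
      moreover have "set s \<subseteq> {D0, D1}" using qr(1,3) pu(1) ubs[OF pu(2)] by auto
      ultimately have "set s \<subseteq> {D0, D1} \<and> Simp (Mlang P {s} \<pi>) \<noteq> {}"
        unfolding key using pu qr(1) by blast
      then show "s \<in> {s. set s \<subseteq> {D0, D1} \<and> Simp (Mlang P {s} \<pi>) \<noteq> {}}" by (rule CollectI)
    qed
  qed
qed

end
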